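(* Let $\mu$ be a vertex of $\Gamma$. Sending a vertex $\eta\neq\mu$ to the branch emanating from $\mu$ that contains $\eta$ gives a bijection from the set of free vertices $\eta$ with $\eta\succ\mu$ onto the set of nonempty branches emanating from $\mu$ that are posterior to $\mu$, and a bijection from the set of vertices $\eta$ with $\mu\succ\eta$ onto the set of branches emanating from $\mu$ that are anterior to $\mu$. In particular there are at most two branches anterior to $\mu$.
   Context: Setting: $R$ two-dimensional regular local ring with algebraically closed residue field; $\pi:X=X_{N+1}\to\cdots\to X_1=\operatorname{Spec}R$ a composition of blowups $\pi_\mu$ at closed points $x_\mu\in X_\mu$; $E_\mu$ the strict transform on $X$ of $\pi_\mu^{-1}(x_\mu)$. $\mu\succ\nu$ ($\mu$ proximate to $\nu$) if $x_\mu$ lies on the strict transform on $X_\mu$ of $\pi_\nu^{-1}(x_\nu)$; $\mu$ is infinitely near to $\nu$ if $X_\mu\to X_\nu$ maps $x_\mu$ to $x_\nu$. A vertex is free if it is proximate to at most one vertex (a vertex is proximate to at most two). Dual graph $\Gamma$: vertices $1..N$, $\gamma\sim\eta$ iff $\gamma\neq\eta$ and $E_\gamma\cap E_\eta\ne\emptyset$ (a tree). The branches emanating from $\mu$ are the subgraphs $\Gamma^\mu_\nu$ ($\nu\sim\mu$), where $\Gamma^\mu_\nu$ is the maximal connected subgraph of $\Gamma$ containing $\nu$ but not $\mu$. A branch is anterior to $\mu$ if $\mu$ is infinitely near to some of its vertices, and posterior to $\mu$ otherwise. *)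

theory Defs
  imports Main
begin

(* Combinatorial model of a sequence of point blowups X_{N+1} -> ... -> X_1 = Spec R.
   Vertex mu (1 <= mu <= N) corresponds to the blowup of the closed point x_mu of X_mu.
   S mu = set of indices nu < mu such that x_mu lies on the strict transform on X_mu
   of the exceptional curve pi_nu^{-1}(x_nu). *)

definition valid_seq :: "nat \<Rightarrow> (nat \<Rightarrow> nat set) \<Rightarrow> bool" where
  "valid_seq N S \<longleftrightarrow>
     (\<forall>mu\<in>{1..N}. S mu \<subseteq> {1..<mu} \<and> card (S mu) \<le> 2 \<and> (2 \<le> mu \<longrightarrow> S mu \<noteq> {}))"

(* intersection graph of the strict transforms E_1..E_{k-1} on X_k *)
primrec adj :: "(nat \<Rightarrow> nat set) \<Rightarrow> nat \<Rightarrow> nat \<Rightarrow> nat \<Rightarrow> bool" where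
  "adj S 0 a b = False"
| "adj S (Suc k) a b =
     ((a < k \<and> b < k \<and> adj S k a b \<and> \<not> (a \<in> S k \<and> b \<in> S k))
      \<or> (a < k \<and> b = k \<and> a \<in> S k)
      \<or> (a = k \<and> b < k \<and> b \<in> S k))"

(* x_mu lies on at most two exceptional curves, and if on two they meet (at x_mu) *)
definition blowup_seq :: "nat \<Rightarrow> (nat \<Rightarrow> nat set) \<Rightarrow> bool" where
  "blowup_seq N S \<longleftrightarrow> valid_seq N S \<and>
     (\<forall>mu\<in>{1..N}. \<forall>a b. S mu = {a, b} \<and> a \<noteq> b \<longrightarrow> adj S mu a b)"

definition vertices :: "nat \<Rightarrow> nat set" where
  "vertices N = {1..N}"

(* dual graph Gamma on X = X_{N+1} *)
definition dual_adj :: "nat \<Rightarrow> (nat \<Rightarrow> nat set) \<Rightarrow> nat \<Rightarrow> nat \<Rightarrow> bool" where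
  "dual_adj N S g e \<longleftrightarrow> g \<in> vertices N \<and> e \<in> vertices N \<and> g \<noteq> e \<and> adj S (Suc N) g e"

definition proximate :: "(nat \<Rightarrow> nat set) \<Rightarrow> nat \<Rightarrow> nat \<Rightarrow> bool" where
  "proximate S mu nu \<longleftrightarrow> nu \<in> S mu"

(* mu infinitely near to nu: X_mu -> X_nu maps x_mu to x_nu *)
inductive inf_near :: "(nat \<Rightarrow> nat set) \<Rightarrow> nat \<Rightarrow> nat \<Rightarrow> bool" for S where
  refl: "inf_near S nu nu"
| step: "rho \<in> S mu \<Longrightarrow> inf_near S rho nu \<Longrightarrow> inf_near S mu nu"

definition free_vertex :: "nat \<Rightarrow> (nat \<Rightarrow> nat set) \<Rightarrow> nat \<Rightarrow> bool" where
  "free_vertex N S eta \<longleftrightarrow> card {nu \<in> vertices N. proximate S eta nu} \<le> 1"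

definition branch :: "nat \<Rightarrow> (nat \<Rightarrow> nat set) \<Rightarrow> nat \<Rightarrow> nat \<Rightarrow> nat set" where
  "branch N S mu nu =
     {x. (\<lambda>a b. dual_adj N S a b \<and> a \<noteq> mu \<and> b \<noteq> mu)\<^sup>*\<^sup>* nu x}"

definition branches :: "nat \<Rightarrow> (nat \<Rightarrow> nat set) \<Rightarrow> nat \<Rightarrow> nat set set" where
  "branches N S mu = {branch N S mu nu | nu. dual_adj N S nu mu}"

definition anterior :: "(nat \<Rightarrow> nat set) \<Rightarrow> nat \<Rightarrow> nat set \<Rightarrow> bool" where
  "anterior S mu B \<longleftrightarrow> (\<exists>rho\<in>B. inf_near S mu rho)"

definition posterior :: "(nat \<Rightarrow> nat set) \<Rightarrow> nat \<Rightarrow> nat set \<Rightarrow> bool" where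
  "posterior S mu B \<longleftrightarrow> \<not> anterior S mu B"

definition branch_containing :: "nat \<Rightarrow> (nat \<Rightarrow> nat set) \<Rightarrow> nat \<Rightarrow> nat \<Rightarrow> nat set" where
  "branch_containing N S mu eta = (THE B. B \<in> branches N S mu \<and> eta \<in> B)"

end

theory Submission
  imports Defs
begin

lemma adj_sym: "adj S k a b \<Longrightarrow> adj S k b a" by (induction k) auto
lemma adj_irr: "\<not> adj S k a a" by (induction k) auto
lemma adj_lt: "adj S k a b \<Longrightarrow> a < k \<and> b < k" by (induction k) auto

lemma adj_pos: "valid_seq N S \<Longrightarrow> k \<le> Suc N \<Longrightarrow> adj S k a b \<Longrightarrow> 1 \<le> a \<and> 1 \<le> b"
proof (induction k arbitrary: a b)
  case 0 then show ?case by simp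
next
  case (Suc k)
  have sub: "k \<ge> 1 \<Longrightarrow> S k \<subseteq> {1..<k}" using Suc.prems unfolding valid_seq_def by auto
  have sub': "\<And>x. x \<in> S k \<Longrightarrow> x < k \<Longrightarrow> 1 \<le> x" using sub by force
  show ?case using Suc.prems(3) Suc.IH[OF Suc.prems(1)] Suc.prems(2) sub' by auto
qed

lemma rtranclp_rev: assumes "\<And>x y. R x y \<Longrightarrow> R y x" and "R\<^sup>*\<^sup>* a b" shows "R\<^sup>*\<^sup>* b a"
  using assms(2)
proof (induction rule: rtranclp_induct)
  case base then show ?case by simp
next
  case (step y z) then show ?case using assms(1) by (meson converse_rtranclp_into_rtranclp)
qed

lemma card2_eq: "finite A \<Longrightarrow> card A \<le> 2 \<Longrightarrow> s \<in> A \<Longrightarrow> t \<in> A \<Longrightarrow> s \<noteq> t \<Longrightarrow> A = {s,t}"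
  by (metis card_seteq card_2_iff empty_subsetI insert_subset)

lemma Sfin: "valid_seq N S \<Longrightarrow> k \<in> {1..N} \<Longrightarrow> finite (S k) \<and> card (S k) \<le> 2 \<and> S k \<subseteq> {1..<k}"
  unfolding valid_seq_def by (meson finite_atLeastLessThan finite_subset)

lemma proj:
  assumes bs: "blowup_seq N S" and kN: "k \<le> N" and xk: "x < k"
  and path: "(\<lambda>u v. adj S (Suc k) u v \<and> Q u v)\<^sup>*\<^sup>* x y"
  and old: "\<And>u v. u < k \<Longrightarrow> v < k \<Longrightarrow> adj S (Suc k) u v \<Longrightarrow> Q u v \<Longrightarrow> P u v"
  and pair: "\<And>s t. s \<in> S k \<Longrightarrow> t \<in> S k \<Longrightarrow> s \<noteq> t \<Longrightarrow> Q s k \<Longrightarrow> Q k t \<Longrightarrow> P s t"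
  shows "(y < k \<longrightarrow> (\<lambda>u v. adj S k u v \<and> P u v)\<^sup>*\<^sup>* x y) \<and>
         (y = k \<longrightarrow> (\<exists>s\<in>S k. Q s k \<and> (\<lambda>u v. adj S k u v \<and> P u v)\<^sup>*\<^sup>* x s))"
  using path
proof (induction rule: rtranclp_induct)
  case base then show ?case using xk by auto
next
  case (step z w)
  from step.hyps(2) have a: "adj S (Suc k) z w" and q: "Q z w" by auto
  from adj_lt[OF a] have zw: "z < Suc k" "w < Suc k" by auto
  have fin: "finite (S k) \<and> card (S k) \<le> 2 \<and> S k \<subseteq> {1..<k}"
    using Sfin[of N S k] bs kN xk unfolding blowup_seq_def by auto
  consider "z < k" "w < k" | "z < k" "w = k" | "z = k" "w < k" | "z=k" "w=k" using zw by linarith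
  then show ?case
  proof cases
    case 1
    then have "adj S k z w" using a by simp
    moreover have "P z w" using old 1 a q by blast
    ultimately show ?thesis using step.IH 1 by (auto intro: rtranclp.rtrancl_into_rtrancl)
  next
    case 2
    then have "z \<in> S k" using a by simp
    then show ?thesis using step.IH 2 q by auto
  next
    case 3
    then have wS: "w \<in> S k" using a by simp
    from step.IH 3 obtain s where s: "s \<in> S k" "Q s k" "(\<lambda>u v. adj S k u v \<and> P u v)\<^sup>*\<^sup>* x s" by auto
    show ?thesis
    proof (cases "s = w")
      case True then show ?thesis using s 3 by auto
    next
      case False
      have Pst: "P s w" using pair[OF s(1) wS False s(2)] q 3 by simp
      have "S k = {s, w}" using card2_eq[of "S k" s w] fin s(1) wS False by simp
      then have "adj S k s w" using bs kN xk False unfolding blowup_seq_def by auto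
      then show ?thesis using s(3) Pst 3 by (auto intro: rtranclp.rtrancl_into_rtrancl)
    qed
  next
    case 4 then show ?thesis using a adj_irr by metis
  qed
qed


lemma sep_step:
  assumes bs: "blowup_seq N S" and kN: "k \<le> N" and "a < k" "b < k"
  and "(\<lambda>u v. adj S (Suc k) u v \<and> u \<noteq> c \<and> v \<noteq> c)\<^sup>*\<^sup>* a b"
  shows "(\<lambda>u v. adj S k u v \<and> u \<noteq> c \<and> v \<noteq> c)\<^sup>*\<^sup>* a b"
proof -
  have "b < k \<longrightarrow> (\<lambda>u v. adj S k u v \<and> (\<lambda>u v. u \<noteq> c \<and> v \<noteq> c) u v)\<^sup>*\<^sup>* a b"
    by (rule conjunct1[OF proj[of N S k a "\<lambda>u v. u \<noteq> c \<and> v \<noteq> c" b "\<lambda>u v. u \<noteq> c \<and> v \<noteq> c"]])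
      (use assms in auto)
  then show ?thesis using assms by simp
qed

lemma sep_iter:
  assumes bs: "blowup_seq N S" and km: "k \<le> m" and "a < k" "b < k"
  shows "m \<le> Suc N \<Longrightarrow> (\<lambda>u v. adj S m u v \<and> u \<noteq> c \<and> v \<noteq> c)\<^sup>*\<^sup>* a b
     \<Longrightarrow> (\<lambda>u v. adj S k u v \<and> u \<noteq> c \<and> v \<noteq> c)\<^sup>*\<^sup>* a b"
  using km
proof (induction m rule: dec_induct)
  case base then show ?case by simp
next
  case (step n)
  have "(\<lambda>u v. adj S n u v \<and> u \<noteq> c \<and> v \<noteq> c)\<^sup>*\<^sup>* a b"
    using sep_step[OF bs, of n a b c] step assms(3,4) by auto
  then show ?case using step by auto
qed

lemma edge_lift: "adj S m u v \<Longrightarrow> u \<noteq> c \<Longrightarrow> v \<noteq> c \<Longrightarrow> m \<noteq> c \<Longrightarrow>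
   (\<lambda>a b. adj S (Suc m) a b \<and> a \<noteq> c \<and> b \<noteq> c)\<^sup>*\<^sup>* u v"
proof -
  assume a: "adj S m u v" "u \<noteq> c" "v \<noteq> c" "m \<noteq> c"
  have lt: "u < m" "v < m" using adj_lt[OF a(1)] by auto
  show ?thesis
  proof (cases "u \<in> S m \<and> v \<in> S m")
    case True
    have "adj S (Suc m) u m" "adj S (Suc m) m v" using True lt by auto
    then have "(\<lambda>a b. adj S (Suc m) a b \<and> a \<noteq> c \<and> b \<noteq> c) u m"
      "(\<lambda>a b. adj S (Suc m) a b \<and> a \<noteq> c \<and> b \<noteq> c) m v" using a by auto
    then show ?thesis
      by (rule converse_rtranclp_into_rtranclp[OF _ r_into_rtranclp])
  next
    case False
    then have "adj S (Suc m) u v" using a lt by auto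
    then show ?thesis using a by (intro r_into_rtranclp) simp
  qed
qed

lemma conn_lift: "(\<lambda>a b. adj S m a b \<and> a \<noteq> c \<and> b \<noteq> c)\<^sup>*\<^sup>* x y \<Longrightarrow> m \<noteq> c \<Longrightarrow>
   (\<lambda>a b. adj S (Suc m) a b \<and> a \<noteq> c \<and> b \<noteq> c)\<^sup>*\<^sup>* x y"
proof (induction rule: rtranclp_induct)
  case base then show ?case by simp
next
  case (step y z)
  have "(\<lambda>a b. adj S (Suc m) a b \<and> a \<noteq> c \<and> b \<noteq> c)\<^sup>*\<^sup>* y z"
    using step.hyps(2) step.prems by (intro edge_lift) auto
  moreover have "(\<lambda>a b. adj S (Suc m) a b \<and> a \<noteq> c \<and> b \<noteq> c)\<^sup>*\<^sup>* x y"
    using step.IH step.prems by simp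
  ultimately show ?case by (rule rtranclp_trans[rotated])
qed

lemma conn_lift_iter: assumes "c < k" "k \<le> m"
  shows "(\<lambda>a b. adj S k a b \<and> a \<noteq> c \<and> b \<noteq> c)\<^sup>*\<^sup>* x y \<Longrightarrow>
   (\<lambda>a b. adj S m a b \<and> a \<noteq> c \<and> b \<noteq> c)\<^sup>*\<^sup>* x y"
  using assms(2)
proof (induction m rule: dec_induct)
  case base then show ?case by simp
next
  case (step n) then show ?case using conn_lift[of S n c x y] assms(1) by auto
qed

lemma conn0: assumes vs: "valid_seq N S"
  shows "m \<le> Suc N \<Longrightarrow> 1 \<le> x \<Longrightarrow> x < m \<Longrightarrow>
    (\<lambda>a b. adj S m a b \<and> a \<noteq> 0 \<and> b \<noteq> 0)\<^sup>*\<^sup>* 1 x"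
proof (induction m arbitrary: x)
  case 0 then show ?case by simp
next
  case (Suc k)
  show ?case
  proof (cases "x < k")
    case True
    then show ?thesis using Suc conn_lift[of S k 0 1 x] by auto
  next
    case False
    then have xk: "x = k" using Suc by auto
    show ?thesis
    proof (cases "k = 1")
      case True then show ?thesis using xk by simp
    next
      case False
      then have "S k \<noteq> {}" "S k \<subseteq> {1..<k}" using vs Suc.prems xk unfolding valid_seq_def by auto
      then obtain s where s: "s \<in> S k" "1 \<le> s" "s < k" by fastforce
      have "(\<lambda>a b. adj S k a b \<and> a \<noteq> 0 \<and> b \<noteq> 0)\<^sup>*\<^sup>* 1 s" using Suc s by auto
      then have "(\<lambda>a b. adj S (Suc k) a b \<and> a \<noteq> 0 \<and> b \<noteq> 0)\<^sup>*\<^sup>* 1 s"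
        using conn_lift[of S k 0 1 s] s by auto
      moreover have "adj S (Suc k) s k" using s by simp
      ultimately show ?thesis using xk s by (auto intro: rtranclp.rtrancl_into_rtrancl)
    qed
  qed
qed


lemma bridge_new:
  assumes bs: "blowup_seq N S" and kN: "k \<le> N" and aS: "a \<in> S k" and ak: "a < k"
  and IH: "\<And>a b. adj S k a b \<Longrightarrow> \<not> (\<lambda>u v. adj S k u v \<and> \<not>(u\<in>{a,b} \<and> v\<in>{a,b}))\<^sup>*\<^sup>* a b"
  and path: "(\<lambda>u v. adj S (Suc k) u v \<and> \<not>(u\<in>{a,k} \<and> v\<in>{a,k}))\<^sup>*\<^sup>* a k"
  shows False
proof -
  have fin: "finite (S k) \<and> card (S k) \<le> 2 \<and> S k \<subseteq> {1..<k}"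
    using Sfin[of N S k] bs kN ak unfolding blowup_seq_def by auto
  have "k = k \<longrightarrow> (\<exists>s\<in>S k. \<not>(s\<in>{a,k} \<and> k\<in>{a,k}) \<and>
      (\<lambda>u v. adj S k u v \<and> \<not>(u\<in>S k \<and> v\<in>S k))\<^sup>*\<^sup>* a s)"
  proof (rule conjunct2[OF proj[OF bs kN ak path]])
    fix u v assume "u < k" "v < k" "adj S (Suc k) u v"
    then show "\<not>(u\<in>S k \<and> v\<in>S k)" by auto
  next
    fix s t assume st: "s \<in> S k" "t \<in> S k" "s \<noteq> t" "\<not>(s\<in>{a,k} \<and> k\<in>{a,k})"
      "\<not>(k\<in>{a,k} \<and> t\<in>{a,k})"
    then have "S k = {s,t}" using card2_eq[of "S k" s t] fin by simp
    then show "\<not>(s\<in>S k \<and> t\<in>S k)" using st aS by auto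
  qed
  then obtain s where s: "s \<in> S k" "s \<noteq> a"
    "(\<lambda>u v. adj S k u v \<and> \<not>(u\<in>S k \<and> v\<in>S k))\<^sup>*\<^sup>* a s" by auto
  have Sk: "S k = {a,s}" using card2_eq[of "S k" a s] fin s aS by simp
  then have "adj S k a s" using bs kN ak s(2) unfolding blowup_seq_def by auto
  from IH[OF this] s(3) Sk show False by simp
qed

lemma bridge: assumes bs: "blowup_seq N S"
  shows "k \<le> Suc N \<Longrightarrow> adj S k a b \<Longrightarrow> \<not> (\<lambda>u v. adj S k u v \<and> \<not>(u\<in>{a,b} \<and> v\<in>{a,b}))\<^sup>*\<^sup>* a b"
proof (induction k arbitrary: a b)
  case 0 then show ?case by simp
next
  case (Suc k)
  have kN: "k \<le> N" using Suc.prems by simp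
  have IH: "\<And>a b. adj S k a b \<Longrightarrow> \<not> (\<lambda>u v. adj S k u v \<and> \<not>(u\<in>{a,b} \<and> v\<in>{a,b}))\<^sup>*\<^sup>* a b"
    using Suc.IH kN by simp
  consider (old) "a < k" "b < k" "adj S k a b" "\<not>(a \<in> S k \<and> b \<in> S k)"
    | (n1) "a < k" "b = k" "a \<in> S k" | (n2) "a = k" "b < k" "b \<in> S k"
    using Suc.prems(2) by auto
  then show ?case
  proof cases
    case old
    show ?thesis
    proof
      assume path: "(\<lambda>u v. adj S (Suc k) u v \<and> \<not>(u\<in>{a,b} \<and> v\<in>{a,b}))\<^sup>*\<^sup>* a b"
      have "b < k \<longrightarrow> (\<lambda>u v. adj S k u v \<and> \<not>(u\<in>{a,b} \<and> v\<in>{a,b}))\<^sup>*\<^sup>* a b"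
      proof (rule conjunct1[OF proj[OF bs kN old(1) path]])
        fix u v assume "\<not>(u\<in>{a,b} \<and> v\<in>{a,b})" then show "\<not>(u\<in>{a,b} \<and> v\<in>{a,b})" .
      next
        fix s t assume st: "s \<in> S k" "t \<in> S k" "s \<noteq> t"
        show "\<not>(s\<in>{a,b} \<and> t\<in>{a,b})" using st old(4) by auto
      qed
      then show False using IH[OF old(3)] old(2) by simp
    qed
  next
    case n1
    show ?thesis
    proof
      assume path: "(\<lambda>u v. adj S (Suc k) u v \<and> \<not>(u\<in>{a,b} \<and> v\<in>{a,b}))\<^sup>*\<^sup>* a b"
      show False using bridge_new[OF bs kN n1(3) n1(1) IH] path n1(2) by simp
    qed
  next
    case n2
    show ?thesis
    proof
      assume path: "(\<lambda>u v. adj S (Suc k) u v \<and> \<not>(u\<in>{a,b} \<and> v\<in>{a,b}))\<^sup>*\<^sup>* a b"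
      have "(\<lambda>u v. adj S (Suc k) u v \<and> \<not>(u\<in>{a,b} \<and> v\<in>{a,b}))\<^sup>*\<^sup>* b a"
        by (rule rtranclp_rev[OF _ path]) (auto intro: adj_sym)
      then have "(\<lambda>u v. adj S (Suc k) u v \<and> \<not>(u\<in>{b,k} \<and> v\<in>{b,k}))\<^sup>*\<^sup>* b k"
        using n2(1) by (simp add: insert_commute)
      then show False using bridge_new[OF bs kN n2(3) n2(2) IH] by simp
    qed
  qed
qed


lemma inf_le: "inf_near S x r \<Longrightarrow> valid_seq N S \<Longrightarrow> x \<in> vertices N \<Longrightarrow> r \<le> x"
proof (induction rule: inf_near.induct)
  case (refl nu) then show ?case by simp
next
  case (step rho mu nu)
  then have "S mu \<subseteq> {1..<mu}" "mu \<le> N" unfolding valid_seq_def vertices_def by auto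
  then have "rho \<in> {1..<mu}" "mu \<le> N" using step by auto
  then show ?case using step unfolding vertices_def by auto
qed

context
  fixes N :: nat and S :: "nat \<Rightarrow> nat set" and mu :: nat
  assumes bs: "blowup_seq N S" and muV: "mu \<in> vertices N"
begin

declare adj.simps(2)[simp del]

abbreviation "G \<equiv> \<lambda>a b. adj S (Suc N) a b \<and> a \<noteq> mu \<and> b \<noteq> mu"

lemma vs: "valid_seq N S" using bs unfolding blowup_seq_def by simp

lemma R_eq: "(\<lambda>a b. dual_adj N S a b \<and> a \<noteq> mu \<and> b \<noteq> mu) = G"
proof (intro ext iffI)
  fix a b assume "dual_adj N S a b \<and> a \<noteq> mu \<and> b \<noteq> mu"
  then show "G a b" unfolding dual_adj_def by auto
next
  fix a b assume g: "G a b"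
  have "a < Suc N" "b < Suc N" using adj_lt g by blast+
  moreover have "1 \<le> a" "1 \<le> b" using adj_pos[OF vs, of "Suc N" a b] g by auto
  moreover have "a \<noteq> b" using g adj_irr by metis
  ultimately show "dual_adj N S a b \<and> a \<noteq> mu \<and> b \<noteq> mu"
    unfolding dual_adj_def vertices_def using g by auto
qed

lemma branch_eq: "branch N S mu nu = {x. G\<^sup>*\<^sup>* nu x}"
  unfolding branch_def R_eq by simp

lemma G_rev: "G\<^sup>*\<^sup>* a b \<Longrightarrow> G\<^sup>*\<^sup>* b a"
  by (rule rtranclp_rev) (auto intro: adj_sym)

lemma C_eq: "G\<^sup>*\<^sup>* a b \<Longrightarrow> {x. G\<^sup>*\<^sup>* a x} = {x. G\<^sup>*\<^sup>* b x}"
proof -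
  assume ab: "G\<^sup>*\<^sup>* a b"
  have ba: "G\<^sup>*\<^sup>* b a" using G_rev[OF ab] .
  show ?thesis using rtranclp_trans[OF ab] rtranclp_trans[OF ba] by blast
qed

lemma notmu: "G\<^sup>*\<^sup>* a b \<Longrightarrow> a \<noteq> mu \<Longrightarrow> b \<noteq> mu"
  by (induction rule: rtranclp_induct) auto

lemma inV: "G\<^sup>*\<^sup>* a b \<Longrightarrow> a \<in> vertices N \<Longrightarrow> b \<in> vertices N"
proof (induction rule: rtranclp_induct)
  case base then show ?case by simp
next
  case (step y z)
  then have "z < Suc N" "1 \<le> z" using adj_lt adj_pos[OF vs, of "Suc N" y z] by auto
  then show ?case unfolding vertices_def by auto
qed

lemma path0: assumes "x \<in> vertices N" "y \<in> vertices N"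
  shows "(\<lambda>a b. adj S (Suc N) a b \<and> a \<noteq> 0 \<and> b \<noteq> 0)\<^sup>*\<^sup>* x y"
proof -
  have p1: "(\<lambda>a b. adj S (Suc N) a b \<and> a \<noteq> 0 \<and> b \<noteq> 0)\<^sup>*\<^sup>* 1 x"
       and p2: "(\<lambda>a b. adj S (Suc N) a b \<and> a \<noteq> 0 \<and> b \<noteq> 0)\<^sup>*\<^sup>* 1 y"
    using conn0[OF vs, of "Suc N"] assms unfolding vertices_def by auto
  have "(\<lambda>a b. adj S (Suc N) a b \<and> a \<noteq> 0 \<and> b \<noteq> 0)\<^sup>*\<^sup>* x 1"
    by (rule rtranclp_rev[OF _ p1]) (auto intro: adj_sym)
  from rtranclp_trans[OF this \<open>(\<lambda>a b. adj S (Suc N) a b \<and> a \<noteq> 0 \<and> b \<noteq> 0)\<^sup>*\<^sup>* 1 y\<close>]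
  show ?thesis .
qed

lemma exists_nb: assumes eV: "eta \<in> vertices N" and emu: "eta \<noteq> mu"
  shows "\<exists>nu. dual_adj N S nu mu \<and> G\<^sup>*\<^sup>* nu eta"
proof -
  have p: "(\<lambda>a b. adj S (Suc N) a b \<and> a \<noteq> 0 \<and> b \<noteq> 0)\<^sup>*\<^sup>* eta mu"
    using path0 eV muV by simp
  have "(\<exists>nu. dual_adj N S nu mu \<and> G\<^sup>*\<^sup>* eta nu) \<or> (t \<noteq> mu \<and> G\<^sup>*\<^sup>* eta t)"
    if "(\<lambda>a b. adj S (Suc N) a b \<and> a \<noteq> 0 \<and> b \<noteq> 0)\<^sup>*\<^sup>* eta t" for t
    using that
  proof (induction rule: rtranclp_induct)
    case base then show ?case using emu by auto
  next
    case (step z w)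
    show ?case
    proof (cases "\<exists>nu. dual_adj N S nu mu \<and> G\<^sup>*\<^sup>* eta nu")
      case True then show ?thesis by simp
    next
      case False
      then have zc: "z \<noteq> mu" "G\<^sup>*\<^sup>* eta z" using step.IH by auto
      have zV: "z \<in> vertices N" using inV[OF zc(2) eV] .
      show ?thesis
      proof (cases "w = mu")
        case True
        then have "dual_adj N S z mu" using zV muV zc step.hyps(2) unfolding dual_adj_def by auto
        then show ?thesis using zc by auto
      next
        case False
        then have "G\<^sup>*\<^sup>* eta w" using zc step.hyps(2) by (auto intro: rtranclp.rtrancl_into_rtrancl)
        then show ?thesis using False by auto
      qed
    qed
  qed
  from this[OF p] obtain nu where "dual_adj N S nu mu" "G\<^sup>*\<^sup>* eta nu" by auto
  then show ?thesis using G_rev[of eta nu] by auto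
qed

lemma branches_eq: "branches N S mu = {{x. G\<^sup>*\<^sup>* nu x} | nu. dual_adj N S nu mu}"
  unfolding branches_def branch_eq by simp

lemma bc: assumes eV: "eta \<in> vertices N" and emu: "eta \<noteq> mu"
  shows "branch_containing N S mu eta = {x. G\<^sup>*\<^sup>* eta x}
     \<and> {x. G\<^sup>*\<^sup>* eta x} \<in> branches N S mu"
proof -
  obtain nu where nu: "dual_adj N S nu mu" "G\<^sup>*\<^sup>* nu eta" using exists_nb[OF eV emu] by auto
  have mem: "{x. G\<^sup>*\<^sup>* eta x} \<in> branches N S mu"
    unfolding branches_eq using C_eq[OF nu(2)] nu(1) by auto
  have "branch_containing N S mu eta = {x. G\<^sup>*\<^sup>* eta x}"
    unfolding branch_containing_def
  proof (rule the_equality)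
    show "{x. G\<^sup>*\<^sup>* eta x} \<in> branches N S mu \<and> eta \<in> {x. G\<^sup>*\<^sup>* eta x}" using mem by simp
  next
    fix B assume "B \<in> branches N S mu \<and> eta \<in> B"
    then obtain nu' where "B = {x. G\<^sup>*\<^sup>* nu' x}" "G\<^sup>*\<^sup>* nu' eta" unfolding branches_eq by auto
    then show "B = {x. G\<^sup>*\<^sup>* eta x}" using C_eq by simp
  qed
  then show ?thesis using mem by simp
qed

lemma Smu: "finite (S mu) \<and> card (S mu) \<le> 2 \<and> S mu \<subseteq> {1..<mu}"
  using Sfin[OF vs] muV unfolding vertices_def by auto

lemma Sof: "eta \<in> vertices N \<Longrightarrow> finite (S eta) \<and> card (S eta) \<le> 2 \<and> S eta \<subseteq> {1..<eta}"
  using Sfin[OF vs] unfolding vertices_def by auto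

lemma below_mu: assumes rV: "r \<in> vertices N" and rmu: "r < mu"
  shows "\<exists>s\<in>S mu. G\<^sup>*\<^sup>* r s"
proof -
  have mu2: "2 \<le> mu" "mu \<le> N" "1 \<le> r" using rV rmu muV unfolding vertices_def by auto
  then have "S mu \<noteq> {}" using vs muV unfolding valid_seq_def vertices_def by auto
  then obtain s0 where s0: "s0 \<in> S mu" by auto
  then have s0b: "1 \<le> s0" "s0 < mu" using Smu by auto
  have p1: "(\<lambda>a b. adj S mu a b \<and> a \<noteq> 0 \<and> b \<noteq> 0)\<^sup>*\<^sup>* 1 r"
    and p2: "(\<lambda>a b. adj S mu a b \<and> a \<noteq> 0 \<and> b \<noteq> 0)\<^sup>*\<^sup>* 1 s0"
    using conn0[OF vs, of mu] mu2 rmu s0b by auto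
  have "(\<lambda>a b. adj S mu a b \<and> a \<noteq> 0 \<and> b \<noteq> 0)\<^sup>*\<^sup>* r 1"
    by (rule rtranclp_rev[OF _ p1]) (auto intro: adj_sym)
  from rtranclp_trans[OF this p2]
  have p: "(\<lambda>a b. adj S mu a b \<and> a \<noteq> 0 \<and> b \<noteq> 0)\<^sup>*\<^sup>* r s0" .
  have claim: "(\<exists>s\<in>S mu. (\<lambda>a b. adj S (Suc mu) a b \<and> a \<noteq> mu \<and> b \<noteq> mu)\<^sup>*\<^sup>* r s)
     \<or> (\<lambda>a b. adj S (Suc mu) a b \<and> a \<noteq> mu \<and> b \<noteq> mu)\<^sup>*\<^sup>* r t"
    if "(\<lambda>a b. adj S mu a b \<and> a \<noteq> 0 \<and> b \<noteq> 0)\<^sup>*\<^sup>* r t" for t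
    using that
  proof (induction rule: rtranclp_induct)
    case base then show ?case by simp
  next
    case (step z w)
    show ?case
    proof (cases "\<exists>s\<in>S mu. (\<lambda>a b. adj S (Suc mu) a b \<and> a \<noteq> mu \<and> b \<noteq> mu)\<^sup>*\<^sup>* r s")
      case True then show ?thesis by simp
    next
      case False
      then have rz: "(\<lambda>a b. adj S (Suc mu) a b \<and> a \<noteq> mu \<and> b \<noteq> mu)\<^sup>*\<^sup>* r z"
        using step.IH by auto
      have a: "adj S mu z w" using step.hyps(2) by simp
      then have lt: "z < mu" "w < mu" using adj_lt by auto
      show ?thesis
      proof (cases "z \<in> S mu \<and> w \<in> S mu")
        case True then show ?thesis using rz by auto
      next
        case False
        then have "adj S (Suc mu) z w" using a lt by (simp add: adj.simps(2))
        then show ?thesis using rz lt by (auto intro: rtranclp.rtrancl_into_rtrancl)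
      qed
    qed
  qed
  from claim[OF p] s0 obtain s where s: "s \<in> S mu"
    "(\<lambda>a b. adj S (Suc mu) a b \<and> a \<noteq> mu \<and> b \<noteq> mu)\<^sup>*\<^sup>* r s" by auto
  have "G\<^sup>*\<^sup>* r s" using conn_lift_iter[of mu "Suc mu" "Suc N" S r s] s(2) mu2 by simp
  then show ?thesis using s(1) by auto
qed

lemma iso: assumes eV: "eta \<in> vertices N" and Se: "S eta = {mu}" and r: "r < eta"
  and p: "G\<^sup>*\<^sup>* eta r" shows False
proof -
  have "mu < eta" using Sof[OF eV] Se by auto
  have eN: "eta \<le> N" using eV unfolding vertices_def by auto
  have "(\<lambda>u v. adj S (Suc eta) u v \<and> u \<noteq> mu \<and> v \<noteq> mu)\<^sup>*\<^sup>* eta r"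
    using sep_iter[OF bs, of "Suc eta" "Suc N" eta r mu] p r eN by simp
  then show False
  proof (rule converse_rtranclpE)
    assume "eta = r" then show False using r by simp
  next
    fix y assume "adj S (Suc eta) eta y \<and> eta \<noteq> mu \<and> y \<noteq> mu"
    then show False using Se by (auto simp: adj.simps(2))
  qed
qed

lemma branch_memb: assumes "B \<in> branches N S mu"
  obtains nu where "B = {x. G\<^sup>*\<^sup>* nu x}" "dual_adj N S nu mu" "nu \<noteq> mu" "nu \<in> vertices N"
  using assms unfolding branches_eq dual_adj_def by auto

lemma anterior_iff: assumes B: "B \<in> branches N S mu"
  shows "anterior S mu B \<longleftrightarrow> (\<exists>r\<in>B. r < mu)"
proof -
  obtain nu where nu: "B = {x. G\<^sup>*\<^sup>* nu x}" "nu \<noteq> mu" "nu \<in> vertices N"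
    using branch_memb[OF B] by blast
  show ?thesis
  proof
    assume "anterior S mu B"
    then obtain r where r: "r \<in> B" "inf_near S mu r" unfolding anterior_def by auto
    have "r \<le> mu" using inf_le[OF r(2) vs muV] .
    moreover have "r \<noteq> mu" using notmu[of nu r] r(1) nu by simp
    ultimately have "r < mu" by simp
    then show "\<exists>r\<in>B. r < mu" using r(1) by blast
  next
    assume "\<exists>r\<in>B. r < mu"
    then obtain r where r: "r \<in> B" "r < mu" by auto
    have rV: "r \<in> vertices N" using inV[of nu r] r nu by simp
    obtain s where s: "s \<in> S mu" "G\<^sup>*\<^sup>* r s" using below_mu[OF rV r(2)] by auto
    have "G\<^sup>*\<^sup>* nu r" using r(1) nu(1) by simp
    from rtranclp_trans[OF this s(2)] have "s \<in> B" using nu(1) by simp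
    moreover have "inf_near S mu s" using inf_near.step[OF s(1) inf_near.refl[of S s]] .
    ultimately show "anterior S mu B" unfolding anterior_def by auto
  qed
qed

lemma A1_char: "eta \<in> {eta \<in> vertices N. free_vertex N S eta \<and> proximate S eta mu}
   \<longleftrightarrow> eta \<in> vertices N \<and> S eta = {mu}"
proof
  assume a: "eta \<in> {eta \<in> vertices N. free_vertex N S eta \<and> proximate S eta mu}"
  then have eV: "eta \<in> vertices N" and m: "mu \<in> S eta"
    and f: "card {nu \<in> vertices N. nu \<in> S eta} \<le> 1"
    unfolding free_vertex_def proximate_def by auto
  have sub: "S eta \<subseteq> vertices N" "finite (S eta)" using Sof[OF eV] eV unfolding vertices_def by auto
  then have "{nu \<in> vertices N. nu \<in> S eta} = S eta" by auto
  then have "card (S eta) \<le> Suc 0" using f by simp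
  then have "\<forall>a1\<in>S eta. \<forall>a2\<in>S eta. a1 = a2" using card_le_Suc0_iff_eq[OF sub(2)] by simp
  then have "S eta = {mu}" using m by blast
  then show "eta \<in> vertices N \<and> S eta = {mu}" using eV by simp
next
  assume a: "eta \<in> vertices N \<and> S eta = {mu}"
  then have "{nu \<in> vertices N. nu \<in> S eta} = {mu}" using muV by auto
  then show "eta \<in> {eta \<in> vertices N. free_vertex N S eta \<and> proximate S eta mu}"
    using a unfolding free_vertex_def proximate_def by simp
qed

lemma part1: "bij_betw (branch_containing N S mu)
           {eta \<in> vertices N. free_vertex N S eta \<and> proximate S eta mu}
           {B \<in> branches N S mu. B \<noteq> {} \<and> posterior S mu B}"
  unfolding bij_betw_def
proof (intro conjI)
  show "inj_on (branch_containing N S mu) {eta \<in> vertices N. free_vertex N S eta \<and> proximate S eta mu}"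
  proof (rule inj_onI)
    fix e1 e2
    assume e1: "e1 \<in> {eta \<in> vertices N. free_vertex N S eta \<and> proximate S eta mu}"
      and e2: "e2 \<in> {eta \<in> vertices N. free_vertex N S eta \<and> proximate S eta mu}"
      and eq: "branch_containing N S mu e1 = branch_containing N S mu e2"
    have c1: "e1 \<in> vertices N" "S e1 = {mu}" using e1 A1_char by blast+
    have c2: "e2 \<in> vertices N" "S e2 = {mu}" using e2 A1_char by blast+
    have n1: "e1 \<noteq> mu" using Sof[OF c1(1)] c1(2) by auto
    have n2: "e2 \<noteq> mu" using Sof[OF c2(1)] c2(2) by auto
    have "{x. G\<^sup>*\<^sup>* e1 x} = {x. G\<^sup>*\<^sup>* e2 x}" using eq bc[OF c1(1) n1] bc[OF c2(1) n2] by simp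
    then have p: "G\<^sup>*\<^sup>* e1 e2" by blast
    show "e1 = e2"
    proof (rule ccontr)
      assume ne: "e1 \<noteq> e2"
      show False
      proof (cases "e2 < e1")
        case True show False by (rule iso[OF c1 True p])
      next
        case False
        then have "e1 < e2" using ne by simp
        then show False using iso[OF c2 _ G_rev[OF p]] by simp
      qed
    qed
  qed
next
  show "branch_containing N S mu ` {eta \<in> vertices N. free_vertex N S eta \<and> proximate S eta mu}
      = {B \<in> branches N S mu. B \<noteq> {} \<and> posterior S mu B}"
  proof (intro set_eqI iffI)
    fix B assume "B \<in> branch_containing N S mu ` {eta \<in> vertices N. free_vertex N S eta \<and> proximate S eta mu}"
    then obtain e where e: "e \<in> {eta \<in> vertices N. free_vertex N S eta \<and> proximate S eta mu}"
      and Be: "B = branch_containing N S mu e" by blast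
    have c: "e \<in> vertices N" "S e = {mu}" using e A1_char by blast+
    have lt: "mu < e" using Sof[OF c(1)] c(2) by auto
    then have n: "e \<noteq> mu" by simp
    have B: "B = {x. G\<^sup>*\<^sup>* e x}" "B \<in> branches N S mu" using bc[OF c(1) n] Be by auto
    have ne: "B \<noteq> {}" using B(1) by auto
    have "\<not> anterior S mu B"
    proof
      assume "anterior S mu B"
      then obtain r where r: "r \<in> B" "r < mu" using anterior_iff[OF B(2)] by blast
      have "G\<^sup>*\<^sup>* e r" using r(1) B(1) by simp
      then show False using iso[OF c, of r] r(2) lt by simp
    qed
    then show "B \<in> {B \<in> branches N S mu. B \<noteq> {} \<and> posterior S mu B}"
      using B ne unfolding posterior_def by simp
  next
    fix B assume "B \<in> {B \<in> branches N S mu. B \<noteq> {} \<and> posterior S mu B}"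
    then have B: "B \<in> branches N S mu" "B \<noteq> {}" "\<not> anterior S mu B"
      unfolding posterior_def by auto
    obtain nu where nu: "B = {x. G\<^sup>*\<^sup>* nu x}" "nu \<noteq> mu" "nu \<in> vertices N"
      using branch_memb[OF B(1)] by blast
    have BV: "B \<subseteq> vertices N" using inV[of nu] nu by blast
    then have finB: "finite B" unfolding vertices_def using finite_subset by blast
    have gt: "mu < x" if "x \<in> B" for x
    proof -
      have "x \<noteq> mu" using notmu[of nu x] that nu by simp
      moreover have "\<not> x < mu" using anterior_iff[OF B(1)] B(3) that by blast
      ultimately show ?thesis by simp
    qed
    define e where "e = Min B"
    have eB: "e \<in> B" using Min_in[OF finB B(2)] e_def by simp
    have eV: "e \<in> vertices N" using eB BV by blast
    have emu: "mu < e" using gt[OF eB] .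
    have Be: "B = {x. G\<^sup>*\<^sup>* e x}" using C_eq[of nu e] eB nu(1) by simp
    have "2 \<le> e" "e \<le> N" using emu muV eV unfolding vertices_def by auto
    then have Sne: "S e \<noteq> {}" using vs eV unfolding valid_seq_def vertices_def by auto
    have Sub: "S e \<subseteq> {1..<e}" using Sof[OF eV] by simp
    have "S e \<subseteq> {mu}"
    proof
      fix s assume sS: "s \<in> S e"
      show "s \<in> {mu}"
      proof (rule ccontr)
        assume "s \<notin> {mu}"
        then have smu: "s \<noteq> mu" by simp
        have slt: "s < e" using sS Sub by auto
        have "adj S (Suc e) e s" using sS slt by (simp add: adj.simps(2))
        then have "(\<lambda>a b. adj S (Suc e) a b \<and> a \<noteq> mu \<and> b \<noteq> mu)\<^sup>*\<^sup>* e s"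
          using smu emu by (intro r_into_rtranclp) simp
        then have "G\<^sup>*\<^sup>* e s"
          using conn_lift_iter[of mu "Suc e" "Suc N" S e s] emu \<open>e \<le> N\<close> by simp
        then have "s \<in> B" using Be by simp
        then have "e \<le> s" using Min_le[OF finB] e_def by simp
        then show False using slt by simp
      qed
    qed
    then have Se: "S e = {mu}" using Sne by blast
    have eA: "e \<in> {eta \<in> vertices N. free_vertex N S eta \<and> proximate S eta mu}"
      using A1_char eV Se by blast
    have "branch_containing N S mu e = B" using bc[OF eV] emu Be by simp
    then show "B \<in> branch_containing N S mu ` {eta \<in> vertices N. free_vertex N S eta \<and> proximate S eta mu}"
      using eA by blast
  qed
qed

lemma A2_eq: "{eta \<in> vertices N. proximate S mu eta} = S mu"
  using Smu muV unfolding proximate_def vertices_def by auto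

lemma part2: "bij_betw (branch_containing N S mu)
           {eta \<in> vertices N. proximate S mu eta}
           {B \<in> branches N S mu. anterior S mu B}"
  unfolding bij_betw_def A2_eq
proof (intro conjI)
  have SV: "S mu \<subseteq> vertices N" using Smu muV unfolding vertices_def by auto
  have muN: "mu \<le> N" using muV unfolding vertices_def by simp
  show "inj_on (branch_containing N S mu) (S mu)"
  proof (rule inj_onI)
    fix s1 s2 assume s1: "s1 \<in> S mu" and s2: "s2 \<in> S mu"
      and eq: "branch_containing N S mu s1 = branch_containing N S mu s2"
    have l1: "s1 < mu" "s1 \<in> vertices N" using s1 Smu SV by auto
    have l2: "s2 < mu" "s2 \<in> vertices N" using s2 Smu SV by auto
    have "{x. G\<^sup>*\<^sup>* s1 x} = {x. G\<^sup>*\<^sup>* s2 x}"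
      using eq bc[OF l1(2)] bc[OF l2(2)] l1 l2 by simp
    then have p: "G\<^sup>*\<^sup>* s1 s2" by blast
    show "s1 = s2"
    proof (rule ccontr)
      assume ne: "s1 \<noteq> s2"
      have p2: "(\<lambda>u v. adj S (Suc mu) u v \<and> u \<noteq> mu \<and> v \<noteq> mu)\<^sup>*\<^sup>* s1 s2"
        using sep_iter[OF bs, of "Suc mu" "Suc N" s1 s2 mu] p l1 l2 muN by simp
      have "s2 < mu \<longrightarrow> (\<lambda>u v. adj S mu u v \<and> \<not>(u \<in> S mu \<and> v \<in> S mu))\<^sup>*\<^sup>* s1 s2"
      proof (rule conjunct1[OF proj[OF bs muN l1(1) p2]])
        fix u v assume "u < mu" "v < mu" "adj S (Suc mu) u v"
        then show "\<not>(u \<in> S mu \<and> v \<in> S mu)" by (auto simp: adj.simps(2))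
      next
        fix s t assume "s \<noteq> mu \<and> mu \<noteq> mu" then show "\<not>(s \<in> S mu \<and> t \<in> S mu)" by simp
      qed
      then have p3: "(\<lambda>u v. adj S mu u v \<and> \<not>(u \<in> S mu \<and> v \<in> S mu))\<^sup>*\<^sup>* s1 s2"
        using l2 by simp
      have Sm: "S mu = {s1, s2}" using card2_eq[of "S mu" s1 s2] Smu s1 s2 ne by simp
      have "adj S mu s1 s2" using bs muV Sm ne unfolding blowup_seq_def vertices_def by auto
      from bridge[OF bs _ this] muN p3 Sm show False by simp
    qed
  qed
next
  have SV: "S mu \<subseteq> vertices N" using Smu muV unfolding vertices_def by auto
  show "branch_containing N S mu ` S mu = {B \<in> branches N S mu. anterior S mu B}"
  proof (intro set_eqI iffI)
    fix B assume "B \<in> branch_containing N S mu ` S mu"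
    then obtain s where s: "s \<in> S mu" "B = branch_containing N S mu s" by blast
    have sV: "s \<in> vertices N" "s \<noteq> mu" using s SV Smu by auto
    have B: "B = {x. G\<^sup>*\<^sup>* s x}" "B \<in> branches N S mu" using bc[OF sV] s by auto
    have "inf_near S mu s" using inf_near.step[OF s(1) inf_near.refl[of S s]] .
    moreover have "s \<in> B" using B(1) by simp
    ultimately have "anterior S mu B" unfolding anterior_def by blast
    then show "B \<in> {B \<in> branches N S mu. anterior S mu B}" using B by simp
  next
    fix B assume "B \<in> {B \<in> branches N S mu. anterior S mu B}"
    then have B: "B \<in> branches N S mu" "anterior S mu B" by auto
    obtain nu where nu: "B = {x. G\<^sup>*\<^sup>* nu x}" "nu \<noteq> mu" "nu \<in> vertices N"
      using branch_memb[OF B(1)] by blast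
    obtain r where r: "r \<in> B" "r < mu" using anterior_iff[OF B(1)] B(2) by blast
    have rV: "r \<in> vertices N" using inV[of nu r] r nu by simp
    obtain s where s: "s \<in> S mu" "G\<^sup>*\<^sup>* r s" using below_mu[OF rV r(2)] by blast
    have sV: "s \<in> vertices N" "s \<noteq> mu" using s SV Smu by auto
    have "G\<^sup>*\<^sup>* nu r" using r(1) nu(1) by simp
    from rtranclp_trans[OF this s(2)] have "G\<^sup>*\<^sup>* nu s" .
    then have "B = {x. G\<^sup>*\<^sup>* s x}" using C_eq nu(1) by simp
    then have "branch_containing N S mu s = B" using bc[OF sV] by simp
    then show "B \<in> branch_containing N S mu ` S mu" using s(1) by blast
  qed
qed

lemma main: "bij_betw (branch_containing N S mu)
           {eta \<in> vertices N. free_vertex N S eta \<and> proximate S eta mu}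
           {B \<in> branches N S mu. B \<noteq> {} \<and> posterior S mu B}
       \<and> bij_betw (branch_containing N S mu)
           {eta \<in> vertices N. proximate S mu eta}
           {B \<in> branches N S mu. anterior S mu B}
       \<and> card {B \<in> branches N S mu. anterior S mu B} \<le> 2"
proof -
  have "card {B \<in> branches N S mu. anterior S mu B} = card {eta \<in> vertices N. proximate S mu eta}"
    using bij_betw_same_card[OF part2] by simp
  also have "\<dots> \<le> 2" using A2_eq Smu by simp
  finally show ?thesis using part1 part2 by simp
qed

end

theorem mainTheorem16:
  fixes N :: nat and S :: "nat \<Rightarrow> nat set" and mu :: nat
  assumes "blowup_seq N S"
    and "mu \<in> vertices N"
  shows "bij_betw (branch_containing N S mu)
           {eta \<in> vertices N. free_vertex N S eta \<and> proximate S eta mu}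
           {B \<in> branches N S mu. B \<noteq> {} \<and> posterior S mu B}
       \<and> bij_betw (branch_containing N S mu)
           {eta \<in> vertices N. proximate S mu eta}
           {B \<in> branches N S mu. anterior S mu B}
       \<and> card {B \<in> branches N S mu. anterior S mu B} \<le> 2"
  using main[OF assms] .

end
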